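(* Let $L\subseteq\Sigma^\omega$ be of the form $L=\bigcup_{i=1}^n U_iV_i^\omega$ where each $U_i\subseteq\Sigma^*$ is Parikh-recognizable and each $V_i\subseteq\Sigma^*$ is regular. Then $L$ is RPBA-recognizable.
   Context: For $V\subseteq\Sigma^*$, $V^\omega=\{w_1w_2\cdots\mid w_i\in V\setminus\{\varepsilon\}\}$. A semi-linear set in $\mathbb{N}^d$ is a finite union of sets $\{b_0+\sum_{j=1}^\ell b_jz_j\mid z_j\in\mathbb{N}\}$ with $b_j\in\mathbb{N}^d$. A Parikh automaton (PA) of dimension $d$ is $(Q,\Sigma,q_0,\Delta,F,C)$ with finite $Q$, $q_0\in Q$, $F\subseteq Q$, finite $\Delta\subseteq Q\times\Sigma\times\mathbb{N}^d\times Q$, semi-linear $C\subseteq\mathbb{N}^d$; it accepts a finite word $x_1\cdots x_n$ if there is a run $r_i=(p_{i-1},x_i,\mathbf{v}_i,p_i)\in\Delta$, $p_0=q_0$, with $p_n\in F$ and $\sum_i\mathbf{v}_i\in C$; Parikh-recognizable languages are those accepted by PA. A reachability Parikh–Büchi automaton (RPBA) is a PA read on infinite words: a run $r_1r_2\cdots$ ($r_i=(p_{i-1},\alpha_i,\mathbf{v}_i,p_i)\in\Delta$, $p_0=q_0$) is accepting if there is $i\ge1$ with $p_i\in F$ and $\sum_{k\le i}\mathbf{v}_k\in C$, and there are infinitely many $j$ with $p_j\in F$. $L$ is RPBA-recognizable if it is the set of infinite words with an accepting run of some RPBA. *)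

theory Defs
  imports Main
begin

(* Finite words: 'a list.  Infinite words: nat \<Rightarrow> 'a.
   Vectors of N^d: nat lists of length d.  Automaton states: nat. *)

definition vadd :: "nat list \<Rightarrow> nat list \<Rightarrow> nat list" where
  "vadd u v = map2 (+) u v"

definition vsum :: "nat \<Rightarrow> nat list list \<Rightarrow> nat list" where
  "vsum d vs = foldr vadd vs (replicate d 0)"

definition linear_set :: "nat \<Rightarrow> nat list \<Rightarrow> nat list list \<Rightarrow> nat list set" where
  "linear_set d b0 Bs =
     {vadd b0 (vsum d (map2 (\<lambda>b z. map (\<lambda>x. z * x) b) Bs zs)) | zs. length zs = length Bs}"

definition semilinear :: "nat \<Rightarrow> nat list set \<Rightarrow> bool" where
  "semilinear d C \<longleftrightarrow> (\<exists>S. finite S \<and>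
     (\<forall>(b0, Bs) \<in> S. length b0 = d \<and> (\<forall>b \<in> set Bs. length b = d)) \<and>
     C = (\<Union>(b0, Bs) \<in> S. linear_set d b0 Bs))"

record 'a pa =
  dim :: nat
  states :: "nat set"
  init :: nat
  trans :: "(nat \<times> 'a \<times> nat list \<times> nat) set"
  final :: "nat set"
  constr :: "nat list set"

definition pa_wf :: "'a set \<Rightarrow> 'a pa \<Rightarrow> bool" where
  "pa_wf \<Sigma> A \<longleftrightarrow> finite (states A) \<and> init A \<in> states A \<and> final A \<subseteq> states A \<and>
     finite (trans A) \<and>
     (\<forall>(p, a, v, q) \<in> trans A. p \<in> states A \<and> a \<in> \<Sigma> \<and> length v = dim A \<and> q \<in> states A) \<and>
     semilinear (dim A) (constr A)"

definition pa_accepts :: "'a pa \<Rightarrow> 'a list \<Rightarrow> bool" where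
  "pa_accepts A w \<longleftrightarrow> (\<exists>(p :: nat \<Rightarrow> nat) (vs :: nat list list).
     length vs = length w \<and> p 0 = init A \<and>
     (\<forall>i < length w. (p i, w ! i, vs ! i, p (Suc i)) \<in> trans A) \<and>
     p (length w) \<in> final A \<and> vsum (dim A) vs \<in> constr A)"

definition parikh_recognizable :: "'a set \<Rightarrow> 'a list set \<Rightarrow> bool" where
  "parikh_recognizable \<Sigma> U \<longleftrightarrow> (\<exists>A. pa_wf \<Sigma> A \<and> U = {w. pa_accepts A w})"

definition rpba_accepts :: "'a pa \<Rightarrow> (nat \<Rightarrow> 'a) \<Rightarrow> bool" where
  "rpba_accepts A \<alpha> \<longleftrightarrow> (\<exists>(p :: nat \<Rightarrow> nat) (vs :: nat \<Rightarrow> nat list).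
     p 0 = init A \<and>
     (\<forall>i. (p i, \<alpha> i, vs i, p (Suc i)) \<in> trans A) \<and>
     (\<exists>i \<ge> 1. p i \<in> final A \<and> vsum (dim A) (map vs [0..<i]) \<in> constr A) \<and>
     (\<exists>\<^sub>\<infinity>j. p j \<in> final A))"

definition rpba_recognizable :: "'a set \<Rightarrow> (nat \<Rightarrow> 'a) set \<Rightarrow> bool" where
  "rpba_recognizable \<Sigma> L \<longleftrightarrow> (\<exists>A. pa_wf \<Sigma> A \<and> L = {\<alpha>. rpba_accepts A \<alpha>})"

definition regular :: "'a set \<Rightarrow> 'a list set \<Rightarrow> bool" where
  "regular \<Sigma> V \<longleftrightarrow> (\<exists>(Q :: nat set) q0 (\<delta> :: (nat \<times> 'a \<times> nat) set) F.
     finite Q \<and> q0 \<in> Q \<and> F \<subseteq> Q \<and> \<delta> \<subseteq> Q \<times> \<Sigma> \<times> Q \<and>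
     V = {w. \<exists>p :: nat \<Rightarrow> nat. p 0 = q0 \<and>
            (\<forall>i < length w. (p i, w ! i, p (Suc i)) \<in> \<delta>) \<and> p (length w) \<in> F})"

(* V^omega = { w1 w2 ... | w_i in V - {eps} } *)
definition omega_iter :: "'a list set \<Rightarrow> (nat \<Rightarrow> 'a) set" where
  "omega_iter V = {\<alpha>. \<exists>ws :: nat \<Rightarrow> 'a list. (\<forall>i. ws i \<in> V - {[]}) \<and>
      (\<forall>i. map \<alpha> [sum_list (map (length \<circ> ws) [0..<i]) ..< sum_list (map (length \<circ> ws) [0..<Suc i])] = ws i)}"

definition conc_inf :: "'a list \<Rightarrow> (nat \<Rightarrow> 'a) \<Rightarrow> (nat \<Rightarrow> 'a)" where
  "conc_inf u \<beta> = (\<lambda>n. if n < length u then u ! n else \<beta> (n - length u))"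

definition lang_conc :: "'a list set \<Rightarrow> (nat \<Rightarrow> 'a) set \<Rightarrow> (nat \<Rightarrow> 'a) set" where
  "lang_conc U W = {conc_inf u \<beta> | u \<beta>. u \<in> U \<and> \<beta> \<in> W}"

end

theory Submission
  imports Defs "HOL-Library.Infinite_Set"
begin

lemma length_vadd[simp]: "length (vadd u v) = min (length u) (length v)"
  by (simp add: vadd_def)

lemma length_vsum: "(\<forall>v\<in>set vs. length v = d) \<Longrightarrow> length (vsum d vs) = d"
  by (induction vs) (auto simp: vsum_def)

lemma vadd_append: "length a = length c \<Longrightarrow> vadd (a @ b) (c @ e) = vadd a c @ vadd b e"
  by (simp add: vadd_def)

lemma vsum_Nil[simp]: "vsum d [] = replicate d 0" by (simp add: vsum_def)
lemma vsum_Cons[simp]: "vsum d (v # vs) = vadd v (vsum d vs)" by (simp add: vsum_def)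

lemma vsum_split:
  assumes "\<forall>x\<in>set xs. length (f x) = d1"
  shows "vsum (d1 + d2) (map (\<lambda>x. f x @ g x) xs) = vsum d1 (map f xs) @ vsum d2 (map g xs)"
  using assms
proof (induction xs)
  case Nil then show ?case by (simp add: replicate_add)
next
  case (Cons x xs)
  have "length (vsum d1 (map f xs)) = d1" using Cons.prems by (intro length_vsum) auto
  then show ?case using Cons by (simp add: vadd_append)
qed

lemma vadd_zeros: "vadd (replicate d 0) (replicate d 0) = replicate d 0"
  by (simp add: vadd_def zip_replicate)

lemma vsum_zeros: "vsum d (map (\<lambda>_. replicate d 0) xs) = replicate d 0"
  by (induction xs) (auto simp: vadd_zeros)

lemma vadd_zero_right: "length u = d \<Longrightarrow> vadd u (replicate d 0) = u"
  by (induction u arbitrary: d) (auto simp: vadd_def)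

lemma vadd_zero_left: "length u = d \<Longrightarrow> vadd (replicate d 0) u = u"
  by (induction u arbitrary: d) (auto simp: vadd_def)

lemma vsum_single: "vsum 1 (map (\<lambda>k. [x k]) ks) = [sum_list (map x ks)]"
  by (induction ks) (auto simp: vadd_def)

lemma vsum_append_zeros:
  assumes "\<forall>v\<in>set ys. v = replicate d 0" "\<forall>v\<in>set xs. length v = d"
  shows "vsum d (xs @ ys) = vsum d xs"
proof -
  have "vsum d ys = replicate d 0" using assms(1)
    by (induction ys) (auto simp: vadd_zeros)
  then show ?thesis by (simp add: vsum_def)
qed

lemma semilinear_empty: "semilinear d {}"
  unfolding semilinear_def by (rule exI[of _ "{}"]) auto

lemma semilinear_union: "semilinear d C1 \<Longrightarrow> semilinear d C2 \<Longrightarrow> semilinear d (C1 \<union> C2)"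
  unfolding semilinear_def
proof (elim exE conjE)
  fix S1 S2
  assume "finite S1" "\<forall>(b0, Bs)\<in>S1. length b0 = d \<and> (\<forall>b\<in>set Bs. length b = d)"
    "C1 = (\<Union>(b0, Bs)\<in>S1. linear_set d b0 Bs)"
    "finite S2" "\<forall>(b0, Bs)\<in>S2. length b0 = d \<and> (\<forall>b\<in>set Bs. length b = d)"
    "C2 = (\<Union>(b0, Bs)\<in>S2. linear_set d b0 Bs)"
  then show "\<exists>S. finite S \<and> (\<forall>(b0, Bs)\<in>S. length b0 = d \<and> (\<forall>b\<in>set Bs. length b = d)) \<and>
      C1 \<union> C2 = (\<Union>(b0, Bs)\<in>S. linear_set d b0 Bs)"
    by (intro exI[of _ "S1 \<union> S2"]) auto
qed

definition emb0 :: "nat \<Rightarrow> nat \<Rightarrow> nat list \<Rightarrow> nat list" where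
  "emb0 d1 d2 b = replicate d1 0 @ b @ replicate d2 0"

lemma linear_set_emb:
  assumes "length pre = d1" "length post = d2" "length b0 = d" "\<forall>b\<in>set Bs. length b = d"
    and "D = d1 + (d + d2)"
  shows "linear_set D (pre @ b0 @ post) (map (emb0 d1 d2) Bs) = (\<lambda>c. pre @ c @ post) ` linear_set d b0 Bs"
proof -
  have key: "vadd (pre @ b0 @ post) (vsum D (map2 (\<lambda>b z. map (\<lambda>x. z * x) b) (map (emb0 d1 d2) Bs) zs))
     = pre @ vadd b0 (vsum d (map2 (\<lambda>b z. map (\<lambda>x. z * x) b) Bs zs)) @ post" for zs
  proof -
    have e1: "map2 (\<lambda>b z. map (\<lambda>x. z * x) b) (map (emb0 d1 d2) Bs) zs
        = map (\<lambda>x. replicate d1 0 @ (map (\<lambda>y. snd x * y) (fst x) @ replicate d2 0)) (zip Bs zs)"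
      by (simp add: emb0_def zip_map1 case_prod_beta)
    have l: "\<forall>x\<in>set (zip Bs zs). length (map (\<lambda>y. snd x * y) (fst x)) = d"
      using assms(4) by (auto dest: set_zip_leftD)
    have "vsum D (map2 (\<lambda>b z. map (\<lambda>x. z * x) b) (map (emb0 d1 d2) Bs) zs)
        = replicate d1 0 @ vsum (d + d2) (map (\<lambda>x. map (\<lambda>y. snd x * y) (fst x) @ replicate d2 0) (zip Bs zs))"
      unfolding e1 assms(5) by (subst vsum_split) (auto simp: vsum_zeros)
    also have "\<dots> = replicate d1 0 @ vsum d (map (\<lambda>x. map (\<lambda>y. snd x * y) (fst x)) (zip Bs zs)) @ replicate d2 0"
      using l by (subst vsum_split) (auto simp: vsum_zeros)
    also have "map (\<lambda>x. map (\<lambda>y. snd x * y) (fst x)) (zip Bs zs) = map2 (\<lambda>b z. map (\<lambda>x. z * x) b) Bs zs"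
      by (simp add: case_prod_beta)
    finally have "vsum D (map2 (\<lambda>b z. map (\<lambda>x. z * x) b) (map (emb0 d1 d2) Bs) zs) =
       replicate d1 0 @ vsum d (map2 (\<lambda>b z. map (\<lambda>x. z * x) b) Bs zs) @ replicate d2 0" .
    moreover have "length (vsum d (map2 (\<lambda>b z. map (\<lambda>x. z * x) b) Bs zs)) = d"
      using assms(4) by (intro length_vsum) (auto dest: set_zip_leftD)
    ultimately show ?thesis using assms(1-3)
      by (simp add: vadd_append vadd_zero_right)
  qed
  show ?thesis unfolding linear_set_def
    by (auto simp: key image_iff)
qed

lemma semilinear_emb:
  assumes "semilinear d C" "length pre = d1" "length post = d2" "D = d1 + (d + d2)"
  shows "semilinear D ((\<lambda>c. pre @ c @ post) ` C)"
proof -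
  obtain S where S: "finite S" "\<forall>(b0, Bs)\<in>S. length b0 = d \<and> (\<forall>b\<in>set Bs. length b = d)"
    "C = (\<Union>(b0, Bs)\<in>S. linear_set d b0 Bs)"
    using assms(1) unfolding semilinear_def by blast
  let ?S = "(\<lambda>(b0, Bs). (pre @ b0 @ post, map (emb0 d1 d2) Bs)) ` S"
  have "(\<lambda>c. pre @ c @ post) ` C = (\<Union>(b0, Bs)\<in>S. (\<lambda>c. pre @ c @ post) ` linear_set d b0 Bs)"
    using S(3) by auto
  also have "\<dots> = (\<Union>(b0, Bs)\<in>S. linear_set D (pre @ b0 @ post) (map (emb0 d1 d2) Bs))"
    using S(2) assms(2-4) by (intro SUP_cong refl) (auto simp: linear_set_emb)
  also have "\<dots> = (\<Union>(b0, Bs)\<in>?S. linear_set D b0 Bs)"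
    by (simp add: image_UN case_prod_beta)
  finally have "(\<lambda>c. pre @ c @ post) ` C = (\<Union>(b0, Bs)\<in>?S. linear_set D b0 Bs)" .
  moreover have "\<forall>(b0, Bs)\<in>?S. length b0 = D \<and> (\<forall>b\<in>set Bs. length b = D)"
    using S(2) assms(2-4) by (fastforce simp: emb0_def)
  ultimately show ?thesis unfolding semilinear_def using S(1) by blast
qed



definition uni :: "'a pa \<Rightarrow> 'a pa \<Rightarrow> 'a pa" where
 "uni A1 A2 =
   \<lparr>dim = dim A1 + (dim A2 + 1),
    states = {0} \<union> (\<lambda>q. 2*q+1) ` states A1 \<union> (\<lambda>q. 2*q+2) ` states A2,
    init = 0,
    trans = {(0, a, v @ replicate (dim A2) 0 @ [1], 2*q+1) | a v q. (init A1, a, v, q) \<in> trans A1}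
          \<union> {(2*p+1, a, v @ replicate (dim A2) 0 @ [0], 2*q+1) | p a v q. (p, a, v, q) \<in> trans A1}
          \<union> {(0, a, replicate (dim A1) 0 @ v @ [0], 2*q+2) | a v q. (init A2, a, v, q) \<in> trans A2}
          \<union> {(2*p+2, a, replicate (dim A1) 0 @ v @ [0], 2*q+2) | p a v q. (p, a, v, q) \<in> trans A2},
    final = (\<lambda>q. 2*q+1) ` final A1 \<union> (\<lambda>q. 2*q+2) ` final A2,
    constr = (\<lambda>c. c @ replicate (dim A2) 0 @ [1]) ` constr A1 \<union> (\<lambda>c. replicate (dim A1) 0 @ c @ [0]) ` constr A2\<rparr>"

lemma sum1:
  assumes "\<forall>k. length (vs k) = d1" "0 < i"
  shows "vsum (d1 + (d2 + 1)) (map (\<lambda>k. vs k @ replicate d2 0 @ [if k = 0 then 1 else 0]) [0..<i])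
       = vsum d1 (map vs [0..<i]) @ replicate d2 0 @ [1]"
proof -
  have s: "sum_list (map (\<lambda>k. if k = 0 then 1 else 0::nat) [0..<i]) = 1"
  proof -
    obtain j where j: "i = Suc j" using assms(2) by (cases i) auto
    have "sum_list (map (\<lambda>k. if k = 0 then 1 else 0::nat) [Suc 0..<Suc j]) = 0"
      by (simp add: sum_list_distinct_conv_sum_set)
    then show ?thesis unfolding j by (simp add: upt_conv_Cons del: upt_Suc)
  qed
  have "vsum (d1 + (d2 + 1)) (map (\<lambda>k. vs k @ replicate d2 0 @ [if k = 0 then 1 else 0]) [0..<i])
      = vsum d1 (map vs [0..<i]) @ vsum (d2 + 1) (map (\<lambda>k. replicate d2 0 @ [if k = 0 then 1 else 0]) [0..<i])"
    using assms(1) by (intro vsum_split) auto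
  also have "vsum (d2 + 1) (map (\<lambda>k. replicate d2 0 @ [if k = 0 then 1 else 0]) [0..<i])
      = vsum d2 (map (\<lambda>k. replicate d2 0) [0..<i]) @ vsum 1 (map (\<lambda>k. [if k = 0 then 1 else 0]) [0..<i])"
    by (intro vsum_split) auto
  finally show ?thesis by (simp only: vsum_zeros vsum_single s)
qed

lemma sum2:
  assumes "\<forall>k. length (vs k) = d2"
  shows "vsum (d1 + (d2 + 1)) (map (\<lambda>k. replicate d1 0 @ vs k @ [0]) [0..<i])
       = replicate d1 0 @ vsum d2 (map vs [0..<i]) @ [0]"
proof -
  have "vsum (d1 + (d2 + 1)) (map (\<lambda>k. replicate d1 0 @ vs k @ [0]) [0..<i])
      = vsum d1 (map (\<lambda>k. replicate d1 0) [0..<i]) @ vsum (d2 + 1) (map (\<lambda>k. vs k @ [0]) [0..<i])"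
    by (intro vsum_split) auto
  also have "vsum (d2 + 1) (map (\<lambda>k. vs k @ [0]) [0..<i])
      = vsum d2 (map vs [0..<i]) @ vsum 1 (map (\<lambda>k. [0]) [0..<i])"
    using assms by (intro vsum_split) auto
  finally show ?thesis by (simp only: vsum_zeros vsum_single) simp
qed

lemma uni_wf:
  assumes "pa_wf \<Sigma> A1" "pa_wf \<Sigma> A2"
  shows "pa_wf \<Sigma> (uni A1 A2)"
proof -
  have f1: "finite {(0::nat, a, v @ replicate (dim A2) 0 @ [1::nat], 2*q+1) | a v q. (init A1, a, v, q) \<in> trans A1}"
    by (rule finite_subset[OF _ finite_imageI[of "trans A1" "\<lambda>(p,a,v,q). (0::nat, a, v @ replicate (dim A2) 0 @ [1::nat], 2*q+1)"]])
       (use assms in \<open>auto intro: rev_image_eqI simp: pa_wf_def\<close>)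
  have f2: "finite {(2*p+1, a, v @ replicate (dim A2) 0 @ [0::nat], 2*q+1) | p a v q. (p, a, v, q) \<in> trans A1}"
    by (rule finite_subset[OF _ finite_imageI[of "trans A1" "\<lambda>(p,a,v,q). (2*p+1, a, v @ replicate (dim A2) 0 @ [0::nat], 2*q+1)"]])
       (use assms in \<open>auto intro: rev_image_eqI simp: pa_wf_def\<close>)
  have f3: "finite {(0::nat, a, replicate (dim A1) 0 @ v @ [0::nat], 2*q+2) | a v q. (init A2, a, v, q) \<in> trans A2}"
    by (rule finite_subset[OF _ finite_imageI[of "trans A2" "\<lambda>(p,a,v,q). (0::nat, a, replicate (dim A1) 0 @ v @ [0::nat], 2*q+2)"]])
       (use assms in \<open>auto intro: rev_image_eqI simp: pa_wf_def\<close>)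
  have f4: "finite {(2*p+2, a, replicate (dim A1) 0 @ v @ [0::nat], 2*q+2) | p a v q. (p, a, v, q) \<in> trans A2}"
    by (rule finite_subset[OF _ finite_imageI[of "trans A2" "\<lambda>(p,a,v,q). (2*p+2, a, replicate (dim A1) 0 @ v @ [0::nat], 2*q+2)"]])
       (use assms in \<open>auto intro: rev_image_eqI simp: pa_wf_def\<close>)
  have s1: "semilinear (dim A1 + (dim A2 + 1)) ((\<lambda>c. [] @ c @ (replicate (dim A2) 0 @ [1])) ` constr A1)"
    using assms(1) by (intro semilinear_emb[of "dim A1" "constr A1" "[]" 0 "replicate (dim A2) 0 @ [1]" "dim A2 + 1"]) (auto simp: pa_wf_def)
  have s2: "semilinear (dim A1 + (dim A2 + 1)) ((\<lambda>c. replicate (dim A1) 0 @ c @ [0]) ` constr A2)"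
    using assms(2) by (intro semilinear_emb[of "dim A2" "constr A2" "replicate (dim A1) 0" "dim A1" "[0]" 1]) (auto simp: pa_wf_def)
  have s: "semilinear (dim A1 + (dim A2 + 1)) ((\<lambda>c. c @ replicate (dim A2) 0 @ [1]) ` constr A1 \<union> (\<lambda>c. replicate (dim A1) 0 @ c @ [0]) ` constr A2)"
    using semilinear_union[OF s1 s2] by simp
  show ?thesis
    unfolding pa_wf_def uni_def using assms f1 f2 f3 f4 s
    by (auto simp: pa_wf_def)
qed

lemma wf_len: "pa_wf \<Sigma> A \<Longrightarrow> (p, a, v, q) \<in> trans A \<Longrightarrow> length v = dim A"
  unfolding pa_wf_def by fast

lemma uni_sound1:
  assumes wf: "pa_wf \<Sigma> A1" and acc: "rpba_accepts A1 \<alpha>"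
  shows "rpba_accepts (uni A1 A2) \<alpha>"
proof -
  obtain p vs where p0: "p 0 = init A1" and tr: "\<forall>i. (p i, \<alpha> i, vs i, p (Suc i)) \<in> trans A1"
    and re: "\<exists>i\<ge>1. p i \<in> final A1 \<and> vsum (dim A1) (map vs [0..<i]) \<in> constr A1"
    and inf: "\<exists>\<^sub>\<infinity>j. p j \<in> final A1"
    using acc unfolding rpba_accepts_def by blast
  have len: "\<forall>k. length (vs k) = dim A1" using tr wf_len[OF wf] by blast
  define p' where "p' n = (if n = 0 then 0 else 2 * p n + 1)" for n
  define vs' where "vs' n = vs n @ replicate (dim A2) 0 @ [if n = 0 then 1 else 0]" for n
  have "(p' i, \<alpha> i, vs' i, p' (Suc i)) \<in> trans (uni A1 A2)" for i
  proof (cases "i = 0")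
    case True then show ?thesis using tr[rule_format, of 0] p0 unfolding p'_def vs'_def uni_def by auto
  next
    case False then show ?thesis using tr[rule_format, of i] unfolding p'_def vs'_def uni_def by auto
  qed
  moreover have "\<exists>i\<ge>1. p' i \<in> final (uni A1 A2) \<and> vsum (dim (uni A1 A2)) (map vs' [0..<i]) \<in> constr (uni A1 A2)"
  proof -
    obtain i where i: "i \<ge> 1" "p i \<in> final A1" "vsum (dim A1) (map vs [0..<i]) \<in> constr A1" using re by blast
    have "vsum (dim (uni A1 A2)) (map vs' [0..<i]) = vsum (dim A1) (map vs [0..<i]) @ replicate (dim A2) 0 @ [1]"
      unfolding vs'_def using sum1[OF len, of i "dim A2"] i(1) by (simp add: uni_def)
    then show ?thesis using i by (intro exI[of _ i]) (auto simp: p'_def uni_def)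
  qed
  moreover have "\<exists>\<^sub>\<infinity>j. p' j \<in> final (uni A1 A2)"
    unfolding INFM_nat
  proof
    fix m
    obtain n where "n > m" "p n \<in> final A1" using inf unfolding INFM_nat by blast
    then show "\<exists>n>m. p' n \<in> final (uni A1 A2)" by (intro exI[of _ n]) (simp add: p'_def uni_def)
  qed
  ultimately show ?thesis unfolding rpba_accepts_def by (intro exI[of _ p'] exI[of _ vs']) (simp add: p'_def uni_def)
qed

lemma uni_sound2:
  assumes wf: "pa_wf \<Sigma> A2" and acc: "rpba_accepts A2 \<alpha>"
  shows "rpba_accepts (uni A1 A2) \<alpha>"
proof -
  obtain p vs where p0: "p 0 = init A2" and tr: "\<forall>i. (p i, \<alpha> i, vs i, p (Suc i)) \<in> trans A2"
    and re: "\<exists>i\<ge>1. p i \<in> final A2 \<and> vsum (dim A2) (map vs [0..<i]) \<in> constr A2"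
    and inf: "\<exists>\<^sub>\<infinity>j. p j \<in> final A2"
    using acc unfolding rpba_accepts_def by blast
  have len: "\<forall>k. length (vs k) = dim A2" using tr wf_len[OF wf] by blast
  define p' where "p' n = (if n = 0 then 0 else 2 * p n + 2)" for n
  define vs' where "vs' n = replicate (dim A1) 0 @ vs n @ [0]" for n
  have "(p' i, \<alpha> i, vs' i, p' (Suc i)) \<in> trans (uni A1 A2)" for i
  proof (cases "i = 0")
    case True then show ?thesis using tr[rule_format, of 0] p0 unfolding p'_def vs'_def uni_def by auto
  next
    case False then show ?thesis using tr[rule_format, of i] unfolding p'_def vs'_def uni_def by auto
  qed
  moreover have "\<exists>i\<ge>1. p' i \<in> final (uni A1 A2) \<and> vsum (dim (uni A1 A2)) (map vs' [0..<i]) \<in> constr (uni A1 A2)"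
  proof -
    obtain i where i: "i \<ge> 1" "p i \<in> final A2" "vsum (dim A2) (map vs [0..<i]) \<in> constr A2" using re by blast
    have "vsum (dim (uni A1 A2)) (map vs' [0..<i]) = replicate (dim A1) 0 @ vsum (dim A2) (map vs [0..<i]) @ [0]"
      unfolding vs'_def using sum2[OF len, of "dim A1" i] by (simp add: uni_def)
    then show ?thesis using i by (intro exI[of _ i]) (auto simp: p'_def uni_def)
  qed
  moreover have "\<exists>\<^sub>\<infinity>j. p' j \<in> final (uni A1 A2)"
    unfolding INFM_nat
  proof
    fix m
    obtain n where "n > m" "p n \<in> final A2" using inf unfolding INFM_nat by blast
    then show "\<exists>n>m. p' n \<in> final (uni A1 A2)" by (intro exI[of _ n]) (simp add: p'_def uni_def)
  qed
  ultimately show ?thesis unfolding rpba_accepts_def by (intro exI[of _ p'] exI[of _ vs']) (simp add: p'_def uni_def)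
qed

lemma uni_complete:
  assumes wf1: "pa_wf \<Sigma> A1" and wf2: "pa_wf \<Sigma> A2" and acc: "rpba_accepts (uni A1 A2) \<alpha>"
  shows "rpba_accepts A1 \<alpha> \<or> rpba_accepts A2 \<alpha>"
proof -
  obtain p' vs' where p0: "p' 0 = init (uni A1 A2)" and tr: "\<forall>i. (p' i, \<alpha> i, vs' i, p' (Suc i)) \<in> trans (uni A1 A2)"
    and re: "\<exists>i\<ge>1. p' i \<in> final (uni A1 A2) \<and> vsum (dim (uni A1 A2)) (map vs' [0..<i]) \<in> constr (uni A1 A2)"
    and inf: "\<exists>\<^sub>\<infinity>j. p' j \<in> final (uni A1 A2)"
    using acc unfolding rpba_accepts_def by blast
  have t0: "(0, \<alpha> 0, vs' 0, p' (Suc 0)) \<in> trans (uni A1 A2)" using tr[rule_format, of 0] p0 by (simp add: uni_def)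
  have "(\<exists>q. p' (Suc 0) = 2*q+1) \<or> (\<exists>q. p' (Suc 0) = 2*q+2)"
    using t0 unfolding uni_def by (auto; presburger)
  then show ?thesis
  proof
    assume "\<exists>q. p' (Suc 0) = 2*q+1"
    have odd: "\<exists>q. p' (Suc n) = 2*q+1" for n
    proof (induction n)
      case 0 then show ?case by fact
    next
      case (Suc n)
      then obtain q where q: "p' (Suc n) = 2*q+1" by blast
      have "(2*q+1, \<alpha> (Suc n), vs' (Suc n), p' (Suc (Suc n))) \<in> trans (uni A1 A2)" using tr[rule_format, of "Suc n"] q by simp
      then show ?case unfolding uni_def by (auto; presburger)
    qed
    define p where "p n = (if n = 0 then init A1 else (p' n - 1) div 2)" for n
    define vs where "vs n = take (dim A1) (vs' n)" for n
    have step: "(p n, \<alpha> n, vs n, p (Suc n)) \<in> trans A1 \<and>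
        vs' n = vs n @ replicate (dim A2) 0 @ [if n = 0 then 1 else 0]" for n
    proof (cases n)
      case 0
      obtain q where q: "p' (Suc 0) = 2*q+1" using odd[of 0] by blast
      from t0 q obtain v where "(init A1, \<alpha> 0, v, q) \<in> trans A1" "vs' 0 = v @ replicate (dim A2) 0 @ [1]"
        unfolding uni_def by (auto; presburger)
      moreover have "length v = dim A1" using wf_len[OF wf1] calculation(1) .
      ultimately show ?thesis using q 0 by (simp add: p_def vs_def)
    next
      case (Suc m)
      obtain q0 where q0: "p' (Suc m) = 2*q0+1" using odd[of m] by blast
      obtain q where q: "p' (Suc (Suc m)) = 2*q+1" using odd[of "Suc m"] by blast
      have "(2*q0+1, \<alpha> n, vs' n, 2*q+1) \<in> trans (uni A1 A2)" using tr[rule_format, of n] q0 q Suc by simp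
      then obtain v where "(q0, \<alpha> n, v, q) \<in> trans A1" "vs' n = v @ replicate (dim A2) 0 @ [0]"
        unfolding uni_def by (auto; presburger)
      moreover have "length v = dim A1" using wf_len[OF wf1] calculation(1) .
      ultimately show ?thesis using q q0 Suc by (simp add: p_def vs_def)
    qed
    have len: "\<forall>k. length (vs k) = dim A1" using step wf_len[OF wf1] by blast
    have fin: "p' n \<in> final (uni A1 A2) \<Longrightarrow> n \<ge> 1 \<Longrightarrow> p n \<in> final A1" for n
    proof -
      assume a: "p' n \<in> final (uni A1 A2)" "n \<ge> 1"
      then obtain m where "n = Suc m" by (cases n) auto
      then obtain q where q: "p' n = 2*q+1" using odd by blast
      then have "q \<in> final A1" using a(1) unfolding uni_def by (auto; presburger)
      then show ?thesis using q a(2) by (simp add: p_def)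
    qed
    have "rpba_accepts A1 \<alpha>"
      unfolding rpba_accepts_def
    proof (intro exI[of _ p] exI[of _ vs] conjI)
      show "p 0 = init A1" by (simp add: p_def)
      show "\<forall>i. (p i, \<alpha> i, vs i, p (Suc i)) \<in> trans A1" using step by blast
      obtain i where i: "i \<ge> 1" "p' i \<in> final (uni A1 A2)" "vsum (dim (uni A1 A2)) (map vs' [0..<i]) \<in> constr (uni A1 A2)"
        using re by blast
      have m: "map vs' [0..<i] = map (\<lambda>k. vs k @ replicate (dim A2) 0 @ [if k = 0 then 1 else 0]) [0..<i]"
        using step by auto
      have "vsum (dim (uni A1 A2)) (map vs' [0..<i]) = vsum (dim A1) (map vs [0..<i]) @ replicate (dim A2) 0 @ [1]"
        unfolding m using sum1[OF len, of i "dim A2"] i(1) by (simp add: uni_def)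
      then have "vsum (dim A1) (map vs [0..<i]) \<in> constr A1" using i(3) by (auto simp: uni_def)
      then show "\<exists>i\<ge>1. p i \<in> final A1 \<and> vsum (dim A1) (map vs [0..<i]) \<in> constr A1"
        using i fin by blast
      show "\<exists>\<^sub>\<infinity>j. p j \<in> final A1"
        unfolding INFM_nat
      proof
        fix m
        obtain n where "n > m" "p' n \<in> final (uni A1 A2)" using inf unfolding INFM_nat by blast
        then show "\<exists>n>m. p n \<in> final A1" using fin by (intro exI[of _ n]) auto
      qed
    qed
    then show ?thesis ..
  next
    assume "\<exists>q. p' (Suc 0) = 2*q+2"
    have even: "\<exists>q. p' (Suc n) = 2*q+2" for n
    proof (induction n)
      case 0 then show ?case by fact
    next
      case (Suc n)
      then obtain q where q: "p' (Suc n) = 2*q+2" by blast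
      have "(2*q+2, \<alpha> (Suc n), vs' (Suc n), p' (Suc (Suc n))) \<in> trans (uni A1 A2)" using tr[rule_format, of "Suc n"] q by simp
      then show ?case unfolding uni_def by (auto; presburger)
    qed
    define p where "p n = (if n = 0 then init A2 else (p' n - 2) div 2)" for n
    define vs where "vs n = take (dim A2) (drop (dim A1) (vs' n))" for n
    have step: "(p n, \<alpha> n, vs n, p (Suc n)) \<in> trans A2 \<and>
        vs' n = replicate (dim A1) 0 @ vs n @ [0]" for n
    proof (cases n)
      case 0
      obtain q where q: "p' (Suc 0) = 2*q+2" using even[of 0] by blast
      from t0 q obtain v where "(init A2, \<alpha> 0, v, q) \<in> trans A2" "vs' 0 = replicate (dim A1) 0 @ v @ [0]"
        unfolding uni_def by (auto; presburger)
      moreover have "length v = dim A2" using wf_len[OF wf2] calculation(1) .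
      ultimately show ?thesis using q 0 by (simp add: p_def vs_def)
    next
      case (Suc m)
      obtain q0 where q0: "p' (Suc m) = 2*q0+2" using even[of m] by blast
      obtain q where q: "p' (Suc (Suc m)) = 2*q+2" using even[of "Suc m"] by blast
      have "(2*q0+2, \<alpha> n, vs' n, 2*q+2) \<in> trans (uni A1 A2)" using tr[rule_format, of n] q0 q Suc by simp
      then obtain v where "(q0, \<alpha> n, v, q) \<in> trans A2" "vs' n = replicate (dim A1) 0 @ v @ [0]"
        unfolding uni_def by (auto; presburger)
      moreover have "length v = dim A2" using wf_len[OF wf2] calculation(1) .
      ultimately show ?thesis using q q0 Suc by (simp add: p_def vs_def)
    qed
    have len: "\<forall>k. length (vs k) = dim A2" using step wf_len[OF wf2] by blast
    have fin: "p' n \<in> final (uni A1 A2) \<Longrightarrow> n \<ge> 1 \<Longrightarrow> p n \<in> final A2" for n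
    proof -
      assume a: "p' n \<in> final (uni A1 A2)" "n \<ge> 1"
      then obtain m where "n = Suc m" by (cases n) auto
      then obtain q where q: "p' n = 2*q+2" using even by blast
      then have "q \<in> final A2" using a(1) unfolding uni_def by (auto; presburger)
      then show ?thesis using q a(2) by (simp add: p_def)
    qed
    have "rpba_accepts A2 \<alpha>"
      unfolding rpba_accepts_def
    proof (intro exI[of _ p] exI[of _ vs] conjI)
      show "p 0 = init A2" by (simp add: p_def)
      show "\<forall>i. (p i, \<alpha> i, vs i, p (Suc i)) \<in> trans A2" using step by blast
      obtain i where i: "i \<ge> 1" "p' i \<in> final (uni A1 A2)" "vsum (dim (uni A1 A2)) (map vs' [0..<i]) \<in> constr (uni A1 A2)"
        using re by blast
      have m: "map vs' [0..<i] = map (\<lambda>k. replicate (dim A1) 0 @ vs k @ [0]) [0..<i]"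
        using step by auto
      have "vsum (dim (uni A1 A2)) (map vs' [0..<i]) = replicate (dim A1) 0 @ vsum (dim A2) (map vs [0..<i]) @ [0]"
        unfolding m using sum2[OF len, of "dim A1" i] by (simp add: uni_def)
      then have "vsum (dim A2) (map vs [0..<i]) \<in> constr A2" using i(3) by (auto simp: uni_def)
      then show "\<exists>i\<ge>1. p i \<in> final A2 \<and> vsum (dim A2) (map vs [0..<i]) \<in> constr A2"
        using i fin by blast
      show "\<exists>\<^sub>\<infinity>j. p j \<in> final A2"
        unfolding INFM_nat
      proof
        fix m
        obtain n where "n > m" "p' n \<in> final (uni A1 A2)" using inf unfolding INFM_nat by blast
        then show "\<exists>n>m. p n \<in> final A2" using fin by (intro exI[of _ n]) auto
      qed
    qed
    then show ?thesis ..
  qed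
qed

lemma rpba_union:
  assumes "rpba_recognizable \<Sigma> L1" "rpba_recognizable \<Sigma> L2"
  shows "rpba_recognizable \<Sigma> (L1 \<union> L2)"
proof -
  obtain A1 A2 where A: "pa_wf \<Sigma> A1" "L1 = {\<alpha>. rpba_accepts A1 \<alpha>}" "pa_wf \<Sigma> A2" "L2 = {\<alpha>. rpba_accepts A2 \<alpha>}"
    using assms unfolding rpba_recognizable_def by blast
  have "L1 \<union> L2 = {\<alpha>. rpba_accepts (uni A1 A2) \<alpha>}"
    using A uni_sound1[OF A(1)] uni_sound2[OF A(3)] uni_complete[OF A(1) A(3)] by blast
  then show ?thesis unfolding rpba_recognizable_def using uni_wf[OF A(1) A(3)] by blast
qed

lemma rpba_empty: "rpba_recognizable \<Sigma> {}"
  unfolding rpba_recognizable_def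
  by (rule exI[of _ "\<lparr>dim = 0, states = {0}, init = 0, trans = {}, final = {}, constr = {}\<rparr>"])
     (auto simp: pa_wf_def rpba_accepts_def semilinear_empty)



definition ns :: "nat \<Rightarrow> nat \<Rightarrow> nat" where
  "ns s0 x = (if x \<noteq> 0 \<and> even x then x div 2 - 1 else s0)"

definition vsrc :: "'a pa \<Rightarrow> nat set \<Rightarrow> nat \<Rightarrow> bool" where
  "vsrc A Q x \<longleftrightarrow> x = 0 \<or> (\<exists>p \<in> final A. x = 2*p+1) \<or> (\<exists>p\<in>Q. x = 2*p+2)"

definition vtgt :: "(nat \<times> 'a \<times> nat) set \<Rightarrow> nat set \<Rightarrow> nat \<Rightarrow> 'a \<Rightarrow> nat \<Rightarrow> bool" where
  "vtgt \<delta> F q a y \<longleftrightarrow> (y = 0 \<and> (\<exists>q'\<in>F. (q, a, q') \<in> \<delta>)) \<or> (\<exists>q'. y = 2*q'+2 \<and> (q, a, q') \<in> \<delta>)"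

definition cc :: "'a pa \<Rightarrow> nat set \<Rightarrow> nat \<Rightarrow> (nat \<times> 'a \<times> nat) set \<Rightarrow> nat set \<Rightarrow> 'a pa" where
  "cc A Q s0 \<delta> F = \<lparr>dim = dim A, states = {0} \<union> (\<lambda>q. 2*q+1) ` states A \<union> (\<lambda>q. 2*q+2) ` Q,
     init = 2 * init A + 1,
     trans = {(2*p+1, a, v, 2*q+1) | p a v q. (p, a, v, q) \<in> trans A}
        \<union> {(x, a, replicate (dim A) 0, y) | x a y. vsrc A Q x \<and> vtgt \<delta> F (ns s0 x) a y},
     final = {0}, constr = constr A\<rparr>"

definition nfa_lang :: "nat \<Rightarrow> (nat \<times> 'a \<times> nat) set \<Rightarrow> nat set \<Rightarrow> 'a list set" where
  "nfa_lang s0 \<delta> F = {w. \<exists>p :: nat \<Rightarrow> nat. p 0 = s0 \<and>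
            (\<forall>i < length w. (p i, w ! i, p (Suc i)) \<in> \<delta>) \<and> p (length w) \<in> F}"

lemma ns_simps[simp]: "ns s0 0 = s0" "ns s0 (2*p+1) = s0" "ns s0 (2*q+2) = q"
  "ns s0 (Suc (2*p)) = s0" "ns s0 (Suc (Suc (2*q))) = q"
  by (auto simp: ns_def)

lemma cc_wf:
  assumes "finite \<Sigma>" "pa_wf \<Sigma> A" "finite Q" "s0 \<in> Q" "F \<subseteq> Q" "\<delta> \<subseteq> Q \<times> \<Sigma> \<times> Q"
  shows "pa_wf \<Sigma> (cc A Q s0 \<delta> F)"
proof -
  have f1: "finite {(2*p+1, a, v, 2*q+1) | p a v q. (p, a, v, q) \<in> trans A}"
    by (rule finite_subset[OF _ finite_imageI[of "trans A" "\<lambda>(p,a,v,q). (2*p+1, a, v, 2*q+1)"]])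
       (use assms in \<open>auto intro: rev_image_eqI simp: pa_wf_def\<close>)
  let ?S = "{0} \<union> (\<lambda>q. 2*q+1) ` states A \<union> (\<lambda>q. 2*q+2) ` Q"
  have sub: "{(x, a, replicate (dim A) 0, y) | x a y. vsrc A Q x \<and> vtgt \<delta> F (ns s0 x) a y}
      \<subseteq> ?S \<times> \<Sigma> \<times> {replicate (dim A) 0} \<times> ?S"
  proof
    fix t assume "t \<in> {(x, a, replicate (dim A) 0, y) | x a y. vsrc A Q x \<and> vtgt \<delta> F (ns s0 x) a y}"
    then obtain x a y where t: "t = (x, a, replicate (dim A) 0, y)" "vsrc A Q x" "vtgt \<delta> F (ns s0 x) a y" by blast
    have "x \<in> ?S" using t(2) assms(2) unfolding vsrc_def pa_wf_def by auto
    moreover have "a \<in> \<Sigma> \<and> y \<in> ?S" using t(3) assms(5,6) unfolding vtgt_def by blast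
    ultimately show "t \<in> ?S \<times> \<Sigma> \<times> {replicate (dim A) 0} \<times> ?S" using t(1) by blast
  qed
  have f2: "finite {(x, a, replicate (dim A) 0, y) | x a y. vsrc A Q x \<and> vtgt \<delta> F (ns s0 x) a y}"
    using assms(1-3) by (intro finite_subset[OF sub]) (auto simp: pa_wf_def)
  have t1: "\<forall>(p, a, v, q) \<in> {(2*p+1, a, v, 2*q+1) | p a v q. (p, a, v, q) \<in> trans A}.
     p \<in> ?S \<and> a \<in> \<Sigma> \<and> length v = dim A \<and> q \<in> ?S"
    using assms(2) unfolding pa_wf_def by auto
  have t2: "\<forall>(p, a, v, q) \<in> {(x, a, replicate (dim A) 0, y) | x a y. vsrc A Q x \<and> vtgt \<delta> F (ns s0 x) a y}.
     p \<in> ?S \<and> a \<in> \<Sigma> \<and> length v = dim A \<and> q \<in> ?S"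
  proof (intro ballI)
    fix t assume "t \<in> {(x, a, replicate (dim A) 0, y) | x a y. vsrc A Q x \<and> vtgt \<delta> F (ns s0 x) a y}"
    then have m: "t \<in> ?S \<times> \<Sigma> \<times> {replicate (dim A) 0} \<times> ?S" using sub by blast
    obtain p a v q where t: "t = (p,a,v,q)" by (cases t)
    show "case t of (p, a, v, q) \<Rightarrow> p \<in> ?S \<and> a \<in> \<Sigma> \<and> length v = dim A \<and> q \<in> ?S"
      using m unfolding t
      apply (simp only: prod.case mem_Times_iff fst_conv snd_conv singleton_iff)
      apply (elim conjE, intro conjI)
      apply simp_all
      done
  qed
  have eq: "trans (cc A Q s0 \<delta> F) = {(2*p+1, a, v, 2*q+1) | p a v q. (p, a, v, q) \<in> trans A}
        \<union> {(x, a, replicate (dim A) 0, y) | x a y. vsrc A Q x \<and> vtgt \<delta> F (ns s0 x) a y}"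
    by (simp add: cc_def)
  have st: "states (cc A Q s0 \<delta> F) = ?S" "dim (cc A Q s0 \<delta> F) = dim A" "init (cc A Q s0 \<delta> F) = 2 * init A + 1"
     "final (cc A Q s0 \<delta> F) = {0}" "constr (cc A Q s0 \<delta> F) = constr A"
    by (simp_all add: cc_def)
  have t: "\<forall>(p, a, v, q) \<in> trans (cc A Q s0 \<delta> F). p \<in> states (cc A Q s0 \<delta> F) \<and> a \<in> \<Sigma> \<and>
      length v = dim (cc A Q s0 \<delta> F) \<and> q \<in> states (cc A Q s0 \<delta> F)"
    unfolding eq st ball_Un using t1 t2 by blast
  have wA: "finite (states A)" "init A \<in> states A" "semilinear (dim A) (constr A)"
    using assms(2) unfolding pa_wf_def by auto
  show ?thesis
    unfolding pa_wf_def
  proof (intro conjI)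
    show "finite (states (cc A Q s0 \<delta> F))" unfolding st using wA assms(3) by simp
    show "init (cc A Q s0 \<delta> F) \<in> states (cc A Q s0 \<delta> F)" unfolding st using wA by simp
    show "final (cc A Q s0 \<delta> F) \<subseteq> states (cc A Q s0 \<delta> F)" unfolding st by simp
    show "finite (trans (cc A Q s0 \<delta> F))" unfolding eq using f1 f2 by simp
    show "semilinear (dim (cc A Q s0 \<delta> F)) (constr (cc A Q s0 \<delta> F))" unfolding st using wA by simp
  qed (rule t)
qed

lemma cc_simps[simp]: "states (cc A Q s0 \<delta> F) = {0} \<union> (\<lambda>q. 2*q+1) ` states A \<union> (\<lambda>q. 2*q+2) ` Q"
  "dim (cc A Q s0 \<delta> F) = dim A" "init (cc A Q s0 \<delta> F) = 2 * init A + 1"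
  "final (cc A Q s0 \<delta> F) = {0}" "constr (cc A Q s0 \<delta> F) = constr A"
  by (simp_all add: cc_def)

lemma cc_trans: "trans (cc A Q s0 \<delta> F) = {(2*p+1, a, v, 2*q+1) | p a v q. (p, a, v, q) \<in> trans A}
        \<union> {(x, a, replicate (dim A) 0, y) | x a y. vsrc A Q x \<and> vtgt \<delta> F (ns s0 x) a y}"
  by (simp add: cc_def)

lemma cc_tr_U:
  assumes "(x, a, v, 2*q+1) \<in> trans (cc A Q s0 \<delta> F)"
  shows "\<exists>p. x = 2*p+1 \<and> (p, a, v, q) \<in> trans A"
proof -
  have "\<not> vtgt \<delta> F (ns s0 x') a' (2*q+1)" for x' a'
    unfolding vtgt_def by (auto; presburger)
  then show ?thesis using assms unfolding cc_trans by auto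
qed

lemma cc_tr_V:
  assumes "(x, a, v, y) \<in> trans (cc A Q s0 \<delta> F)" "\<forall>q. y \<noteq> 2*q+1"
  shows "vsrc A Q x \<and> vtgt \<delta> F (ns s0 x) a y \<and> v = replicate (dim A) 0"
  using assms unfolding cc_trans by auto

lemma cc_tr_noU:
  assumes "(x, a, v, y) \<in> trans (cc A Q s0 \<delta> F)" "\<forall>p. x \<noteq> 2*p+1"
  shows "\<forall>q. y \<noteq> 2*q+1"
proof (intro allI notI)
  fix q assume "y = 2*q+1"
  then show False using assms cc_tr_U[of x a v q] by blast
qed

lemma seg_lang:
  assumes tr: "\<forall>j. (p j, \<alpha> j, vs j, p (Suc j)) \<in> trans (cc A Q s0 \<delta> F)"
    and ab: "a < b"
    and nU: "\<forall>j. a \<le> j \<longrightarrow> j < b \<longrightarrow> (\<forall>q. p (Suc j) \<noteq> 2*q+1)"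
    and nz: "\<forall>j. a < j \<longrightarrow> j < b \<longrightarrow> p j \<noteq> 0"
    and pb: "p b = 0"
    and pa: "ns s0 (p a) = s0"
  shows "map \<alpha> [a..<b] \<in> nfa_lang s0 \<delta> F"
proof -
  have V: "vtgt \<delta> F (ns s0 (p j)) (\<alpha> j) (p (Suc j))" if "a \<le> j" "j < b" for j
    using cc_tr_V[OF tr[rule_format, of j]] nU that by blast
  obtain qf where qf: "qf \<in> F" "(ns s0 (p (b - 1)), \<alpha> (b - 1), qf) \<in> \<delta>"
  proof -
    have "a \<le> b - 1" "b - 1 < b" using ab by auto
    then have "vtgt \<delta> F (ns s0 (p (b - 1))) (\<alpha> (b - 1)) (p (Suc (b - 1)))" using V by blast
    moreover have "Suc (b - 1) = b" using ab by simp
    ultimately show ?thesis using pb that unfolding vtgt_def by auto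
  qed
  have inner: "(ns s0 (p j), \<alpha> j, ns s0 (p (Suc j))) \<in> \<delta>" if "a \<le> j" "Suc j < b" for j
  proof -
    have "vtgt \<delta> F (ns s0 (p j)) (\<alpha> j) (p (Suc j))" using V that by simp
    moreover have "p (Suc j) \<noteq> 0" using nz that by simp
    ultimately obtain q' where "p (Suc j) = 2*q'+2" "(ns s0 (p j), \<alpha> j, q') \<in> \<delta>"
      unfolding vtgt_def by auto
    then show ?thesis by simp
  qed
  define \<rho> where "\<rho> i = (if i < b - a then ns s0 (p (a + i)) else qf)" for i
  show ?thesis
    unfolding nfa_lang_def
  proof (intro CollectI exI[of _ \<rho>] conjI allI impI)
    show "\<rho> 0 = s0" using pa ab by (simp add: \<rho>_def)
    show "\<rho> (length (map \<alpha> [a..<b])) \<in> F" using qf by (simp add: \<rho>_def)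
    fix i assume i: "i < length (map \<alpha> [a..<b])"
    then have i': "i < b - a" by simp
    show "(\<rho> i, map \<alpha> [a..<b] ! i, \<rho> (Suc i)) \<in> \<delta>"
    proof (cases "Suc i < b - a")
      case True
      then show ?thesis using inner[of "a + i"] i' by (simp add: \<rho>_def)
    next
      case False
      then have "a + i = b - 1" using i' by simp
      then show ?thesis using qf False i' by (simp add: \<rho>_def)
    qed
  qed
qed

lemma cc_sound:
  assumes wf: "pa_wf \<Sigma> A" and acc: "rpba_accepts (cc A Q s0 \<delta> F) \<alpha>"
  shows "\<alpha> \<in> lang_conc {w. pa_accepts A w} (omega_iter (nfa_lang s0 \<delta> F))"
proof -
  obtain p vs where p0: "p 0 = 2 * init A + 1" and tr: "\<forall>i. (p i, \<alpha> i, vs i, p (Suc i)) \<in> trans (cc A Q s0 \<delta> F)"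
    and re: "\<exists>i\<ge>1. p i = 0 \<and> vsum (dim A) (map vs [0..<i]) \<in> constr A"
    and inf: "\<exists>\<^sub>\<infinity>j. p j = 0"
    using acc unfolding rpba_accepts_def by auto
  obtain i0 where i0: "i0 \<ge> 1" "p i0 = 0" "vsum (dim A) (map vs [0..<i0]) \<in> constr A" using re by blast
  have ex: "\<exists>m. \<not> (\<exists>q. p (Suc m) = 2*q+1)"
    using i0 by (intro exI[of _ "i0 - 1"]) auto
  define k where "k = (LEAST m. \<not> (\<exists>q. p (Suc m) = 2*q+1))"
  have kU: "\<not> (\<exists>q. p (Suc k) = 2*q+1)" unfolding k_def using LeastI_ex[OF ex] .
  have allU: "\<exists>q. p m = 2*q+1" if "m \<le> k" for m
  proof (cases m)
    case 0 then show ?thesis using p0 by blast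
  next
    case (Suc m')
    then have "m' < k" using that by simp
    then show ?thesis using not_less_Least[of m' "\<lambda>m. \<not> (\<exists>q. p (Suc m) = 2*q+1)"] Suc
      unfolding k_def by blast
  qed
  have notU: "\<forall>q. p (Suc (k + m)) \<noteq> 2*q+1" for m
  proof (induction m)
    case 0 then show ?case using kU by simp
  next
    case (Suc m)
    show ?case using cc_tr_noU[OF tr[rule_format, of "Suc (k + m)"]] Suc by simp
  qed
  have nU': "\<forall>q. p (Suc j) \<noteq> 2*q+1" if "j \<ge> k" for j
    using notU[of "j - k"] that by simp
  define pu where "pu m = (p m - 1) div 2" for m
  have puE: "p m = 2 * pu m + 1" if "m \<le> k" for m
    using allU[OF that] by (auto simp: pu_def)
  have trA: "(pu m, \<alpha> m, vs m, pu (Suc m)) \<in> trans A" if "m < k" for m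
  proof -
    have "(p m, \<alpha> m, vs m, 2 * pu (Suc m) + 1) \<in> trans (cc A Q s0 \<delta> F)"
      using tr[rule_format, of m] puE[of "Suc m"] that by simp
    from cc_tr_U[OF this] obtain p' where "p m = 2*p'+1" "(p', \<alpha> m, vs m, pu (Suc m)) \<in> trans A" by blast
    then show ?thesis using puE[of m] that by simp
  qed
  have finalk: "pu k \<in> final A"
  proof -
    have "vsrc A Q (p k)" using cc_tr_V[OF tr[rule_format, of k]] kU by blast
    then show ?thesis using puE[of k] unfolding vsrc_def by (auto; presburger)
  qed
  have zeros: "vs j = replicate (dim A) 0" if "j \<ge> k" for j
    using cc_tr_V[OF tr[rule_format, of j]] nU'[OF that] by blast
  have i0k: "k < i0"
  proof (rule ccontr)
    assume "\<not> k < i0"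
    then show False using puE[of i0] i0(2) by simp
  qed
  define u where "u = map \<alpha> [0..<k]"
  have lenA: "length (vs m) = dim A" if "m < k" for m using wf_len[OF wf trA[OF that]] .
  have uacc: "pa_accepts A u"
    unfolding pa_accepts_def
  proof (intro exI[of _ pu] exI[of _ "map vs [0..<k]"] conjI allI impI)
    show "length (map vs [0..<k]) = length u" by (simp add: u_def)
    show "pu 0 = init A" using p0 by (simp add: pu_def)
    show "pu (length u) \<in> final A" using finalk by (simp add: u_def)
    fix i assume "i < length u"
    then show "(pu i, u ! i, map vs [0..<k] ! i, pu (Suc i)) \<in> trans A" using trA by (simp add: u_def)
  next
    have "[0..<i0] = [0..<k] @ [k..<i0]" using upt_add_eq_append[of 0 k "i0 - k"] i0k by simp
    then have "map vs [0..<i0] = map vs [0..<k] @ map vs [k..<i0]" by simp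
    moreover have "vsum (dim A) (map vs [0..<k] @ map vs [k..<i0]) = vsum (dim A) (map vs [0..<k])"
      using zeros lenA by (intro vsum_append_zeros) auto
    ultimately show "vsum (dim A) (map vs [0..<k]) \<in> constr A" using i0(3) by simp
  qed
  define \<beta> where "\<beta> m = \<alpha> (k + m)" for m
  have conc: "\<alpha> = conc_inf u \<beta>"
    by (rule ext) (auto simp: conc_inf_def u_def \<beta>_def)
  define q where "q j = p (k + j)" for j
  have tr': "\<forall>j. (q j, \<beta> j, vs (k + j), q (Suc j)) \<in> trans (cc A Q s0 \<delta> F)"
    using tr by (simp add: q_def \<beta>_def)
  have infq: "\<exists>m'>m. q m' = 0" for m
  proof -
    obtain n where "n > k + m" "p n = 0" using inf unfolding INFM_nat by blast
    then show ?thesis by (intro exI[of _ "n - k"]) (auto simp: q_def)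
  qed
  define nxt where "nxt m = (LEAST m'. m < m' \<and> q m' = 0)" for m
  have nxt: "m < nxt m \<and> q (nxt m) = 0" for m
    unfolding nxt_def using LeastI_ex[OF infq[of m]] .
  have nxt_min: "q j \<noteq> 0" if "m < j" "j < nxt m" for m j
    using not_less_Least[of j "\<lambda>m'. m < m' \<and> q m' = 0"] that unfolding nxt_def by auto
  define t where "t i = (nxt ^^ i) 0" for i
  have tS: "t (Suc i) = nxt (t i)" for i by (simp add: t_def)
  have tlt: "t i < t (Suc i)" for i using nxt tS by simp
  define ws where "ws i = map \<beta> [t i..<t (Suc i)]" for i
  have tsum: "sum_list (map (length \<circ> ws) [0..<i]) = t i" for i
  proof (induction i)
    case 0 then show ?case by (simp add: t_def)
  next
    case (Suc i) then show ?case using tlt[of i] by (simp add: ws_def)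
  qed
  have wsV: "ws i \<in> nfa_lang s0 \<delta> F" for i
    unfolding ws_def
  proof (rule seg_lang[OF tr' tlt])
    show "\<forall>j. t i \<le> j \<longrightarrow> j < t (Suc i) \<longrightarrow> (\<forall>qa. q (Suc j) \<noteq> 2 * qa + 1)"
      using nU' by (simp add: q_def)
    show "\<forall>j. t i < j \<longrightarrow> j < t (Suc i) \<longrightarrow> q j \<noteq> 0"
      using nxt_min tS by simp
    show "q (t (Suc i)) = 0" using nxt tS by simp
    show "ns s0 (q (t i)) = s0"
    proof (cases i)
      case 0 then show ?thesis using puE[of k] by (simp add: t_def q_def)
    next
      case (Suc i') then show ?thesis using nxt tS by simp
    qed
  qed
  have "\<beta> \<in> omega_iter (nfa_lang s0 \<delta> F)"
    unfolding omega_iter_def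
  proof (intro CollectI exI[of _ ws] conjI allI)
    fix i
    show "ws i \<in> nfa_lang s0 \<delta> F - {[]}" using wsV tlt[of i] by (simp add: ws_def)
    show "map \<beta> [sum_list (map (length \<circ> ws) [0..<i])..<sum_list (map (length \<circ> ws) [0..<Suc i])] = ws i"
      unfolding tsum by (simp add: ws_def)
  qed
  then show ?thesis unfolding lang_conc_def using conc uacc by blast
qed

lemma cc_complete:
  assumes wf: "pa_wf \<Sigma> A" and dsub: "\<delta> \<subseteq> Q \<times> \<Sigma> \<times> Q"
    and uA: "pa_accepts A u" and bV: "\<beta> \<in> omega_iter (nfa_lang s0 \<delta> F)"
  shows "rpba_accepts (cc A Q s0 \<delta> F) (conc_inf u \<beta>)"
proof -
  define k where "k = length u"
  obtain pA vsA where vA: "length vsA = k" "pA 0 = init A"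
    "\<forall>i<k. (pA i, u ! i, vsA ! i, pA (Suc i)) \<in> trans A" "pA k \<in> final A" "vsum (dim A) vsA \<in> constr A"
    using uA unfolding pa_accepts_def k_def by blast
  obtain ws where ws: "\<forall>i. ws i \<in> nfa_lang s0 \<delta> F - {[]}"
    "\<forall>i. map \<beta> [sum_list (map (length \<circ> ws) [0..<i]) ..< sum_list (map (length \<circ> ws) [0..<Suc i])] = ws i"
    using bV unfolding omega_iter_def by blast
  define T where "T i = sum_list (map (length \<circ> ws) [0..<i])" for i
  have TS: "T (Suc i) = T i + length (ws i)" for i by (simp add: T_def)
  have T0: "T 0 = 0" by (simp add: T_def)
  have Tlt: "T i < T (Suc i)" for i using ws(1) TS[of i] by (cases "ws i") auto
  have smT: "strict_mono T" using Tlt strict_mono_Suc_iff by blast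
  have Tge: "n \<le> T n" for n
  proof (induction n)
    case 0 then show ?case by simp
  next
    case (Suc n) then show ?case using Tlt[of n] by simp
  qed
  have \<beta>E: "\<beta> (T i + j) = ws i ! j" if "j < length (ws i)" for i j
  proof -
    have "map \<beta> [T i..<T (Suc i)] = ws i" using ws(2) by (simp add: T_def)
    then have "map \<beta> [T i..<T (Suc i)] ! j = ws i ! j" by simp
    then show ?thesis using that TS[of i] by (simp add: nth_map_upt)
  qed
  have "\<forall>i. \<exists>r. r 0 = s0 \<and> (\<forall>j<length (ws i). (r j, ws i ! j, r (Suc j)) \<in> \<delta>) \<and> r (length (ws i)) \<in> F"
    using ws(1) unfolding nfa_lang_def by blast
  then obtain \<rho> where \<rho>: "\<forall>i. \<rho> i 0 = s0 \<and> (\<forall>j<length (ws i). (\<rho> i j, ws i ! j, \<rho> i (Suc j)) \<in> \<delta>) \<and> \<rho> i (length (ws i)) \<in> F"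
    using choice[of "\<lambda>i r. r 0 = s0 \<and> (\<forall>j<length (ws i). (r j, ws i ! j, r (Suc j)) \<in> \<delta>) \<and> r (length (ws i)) \<in> F"] by blast
  have \<rho>0: "\<rho> i 0 = s0" for i using \<rho> by blast
  have \<rho>s: "(\<rho> i j, ws i ! j, \<rho> i (Suc j)) \<in> \<delta>" if "j < length (ws i)" for i j
    using \<rho> that by simp
  have \<rho>F: "\<rho> i (length (ws i)) \<in> F" for i using \<rho> by blast
  have \<rho>Q: "\<rho> i j \<in> Q" if j0: "0 < j" and jl: "j \<le> length (ws i)" for i j
  proof -
    obtain j' where j': "j = Suc j'" using j0 gr0_implies_Suc by blast
    have "j' < length (ws i)" using jl j' by simp
    then have "(\<rho> i j', ws i ! j', \<rho> i (Suc j')) \<in> Q \<times> \<Sigma> \<times> Q" by (rule subsetD[OF dsub \<rho>s])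
    then show ?thesis using j' by simp
  qed
  define sg where "sg m = (LEAST i. m < T (Suc i))" for m
  have sg: "T (sg m) \<le> m \<and> m < T (Suc (sg m))" for m
  proof -
    have ex: "m < T (Suc m)" using Tge[of "Suc m"] by simp
    have a: "m < T (Suc (sg m))" unfolding sg_def using LeastI[of "\<lambda>i. m < T (Suc i)", OF ex] .
    have b: "T (sg m) \<le> m"
    proof (cases "sg m")
      case 0 then show ?thesis using T0 by simp
    next
      case (Suc i')
      then have "i' < sg m" by simp
      then have "\<not> m < T (Suc i')" using not_less_Least[of i' "\<lambda>i. m < T (Suc i)"] unfolding sg_def by blast
      then show ?thesis using Suc by simp
    qed
    show ?thesis using a b by simp
  qed
  have sg_eq: "sg m = i" if "T i \<le> m" "m < T (Suc i)" for m i
  proof (rule antisym)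
    show "sg m \<le> i" unfolding sg_def using that(2) by (rule Least_le)
    show "i \<le> sg m"
    proof (rule ccontr)
      assume "\<not> i \<le> sg m"
      then have "Suc (sg m) \<le> i" by simp
      then have "T (Suc (sg m)) \<le> T i" using strict_mono_less_eq[OF smT] by blast
      then show False using sg[of m] that by simp
    qed
  qed
  define P where "P n = (if n < k then 2 * pA n + 1 else
      (if n - k - T (sg (n - k)) = 0 then (if n - k = 0 then 2 * pA k + 1 else 0)
       else 2 * \<rho> (sg (n - k)) (n - k - T (sg (n - k))) + 2))" for n
  define VS where "VS n = (if n < k then vsA ! n else replicate (dim A) 0)" for n
  have sg0: "sg 0 = 0" using sg_eq[of 0 0] T0 Tlt[of 0] by simp
  have PU: "P n = 2 * pA n + 1" if "n \<le> k" for n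
    using that sg0 by (cases "n < k") (auto simp: P_def)
  have PV: "P (k + m) = (if m - T (sg m) = 0 then (if m = 0 then 2 * pA k + 1 else 0)
       else 2 * \<rho> (sg m) (m - T (sg m)) + 2)" for m
    by (simp add: P_def)
  have Pr: "P (k + T i) = 0" if "i \<ge> 1" for i
  proof -
    have "sg (T i) = i" using sg_eq[of i "T i"] Tlt[of i] by simp
    moreover have "T i \<noteq> 0" using Tge[of i] that by simp
    ultimately show ?thesis using PV[of "T i"] by simp
  qed
  let ?\<alpha> = "conc_inf u \<beta>"
  have trans_all: "(P n, ?\<alpha> n, VS n, P (Suc n)) \<in> trans (cc A Q s0 \<delta> F)" for n
  proof (cases "n < k")
    case True
    have "(pA n, u ! n, vsA ! n, pA (Suc n)) \<in> trans A" using vA(3) True by blast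
    moreover have "?\<alpha> n = u ! n" using True by (simp add: conc_inf_def k_def)
    moreover have "P n = 2 * pA n + 1" "P (Suc n) = 2 * pA (Suc n) + 1" using PU True by auto
    moreover have "VS n = vsA ! n" using True by (simp add: VS_def)
    ultimately show ?thesis unfolding cc_trans by auto
  next
    case False
    define m where "m = n - k"
    have n: "n = k + m" using False by (simp add: m_def)
    define i where "i = sg m"
    define j where "j = m - T i"
    have mi: "m = T i + j" "j < length (ws i)" using sg[of m] TS[of i] by (auto simp: i_def j_def)
    have an: "?\<alpha> n = ws i ! j" using False \<beta>E[OF mi(2)] mi(1) by (simp add: conc_inf_def k_def m_def)
    have VSn: "VS n = replicate (dim A) 0" using False by (simp add: VS_def)
    have src: "vsrc A Q (P n) \<and> ns s0 (P n) = \<rho> i j"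
    proof (cases "j = 0")
      case True
      then show ?thesis using PV[of m] \<rho> vA(4) unfolding n by (auto simp: vsrc_def i_def j_def)
    next
      case False
      then have "P n = 2 * \<rho> i j + 2" using PV[of m] unfolding n by (simp add: i_def j_def)
      moreover have "\<rho> i j \<in> Q" using \<rho>Q[of j i] False mi(2) by simp
      ultimately show ?thesis by (auto simp: vsrc_def)
    qed
    have tgt: "vtgt \<delta> F (\<rho> i j) (ws i ! j) (P (Suc n))"
    proof (cases "Suc m < T (Suc i)")
      case True
      then have "sg (Suc m) = i" using sg_eq[of i "Suc m"] mi(1) by simp
      then have "P (Suc n) = 2 * \<rho> i (Suc j) + 2" using PV[of "Suc m"] mi(1) n by simp
      moreover have "(\<rho> i j, ws i ! j, \<rho> i (Suc j)) \<in> \<delta>" using \<rho> mi(2) by blast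
      ultimately show ?thesis unfolding vtgt_def by auto
    next
      case False
      then have e: "Suc m = T (Suc i)" using sg[of m] by (simp add: i_def)
      have sgS: "sg (Suc m) = Suc i" using sg_eq[of "Suc i" "Suc m"] Tlt[of "Suc i"] e by simp
      have "P (k + Suc m) = 0" unfolding PV using sgS by (simp add: e[symmetric])
      then have "P (Suc n) = 0" using n by simp
      moreover have "Suc j = length (ws i)" using e mi TS[of i] by simp
      moreover have "(\<rho> i j, ws i ! j, \<rho> i (Suc j)) \<in> \<delta>" using \<rho> mi(2) by blast
      ultimately show ?thesis unfolding vtgt_def using \<rho> by auto
    qed
    show ?thesis unfolding cc_trans using src tgt an VSn by auto
  qed
  show ?thesis
    unfolding rpba_accepts_def
  proof (intro exI[of _ P] exI[of _ VS] conjI)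
    show "P 0 = init (cc A Q s0 \<delta> F)" using PU[of 0] vA(2) by simp
    show "\<forall>i. (P i, ?\<alpha> i, VS i, P (Suc i)) \<in> trans (cc A Q s0 \<delta> F)" using trans_all by blast
    have "map VS [0..<k] = vsA"
      using vA(1) by (intro nth_equalityI) (auto simp: VS_def)
    moreover have "[0..<k + T 1] = [0..<k] @ [k..<k + T 1]" using upt_add_eq_append[of 0 k "T 1"] by simp
    moreover have "\<forall>v\<in>set (map VS [k..<k + T 1]). v = replicate (dim A) 0" by (auto simp: VS_def)
    moreover have "\<forall>v\<in>set vsA. length v = dim A"
    proof
      fix v assume "v \<in> set vsA"
      then obtain i where "i < k" "v = vsA ! i" using vA(1) by (auto simp: in_set_conv_nth)
      then show "length v = dim A" using wf_len[OF wf] vA(3) by blast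
    qed
    ultimately have "vsum (dim A) (map VS [0..<k + T 1]) = vsum (dim A) vsA"
      using vsum_append_zeros by (metis map_append)
    then show "\<exists>i\<ge>1. P i \<in> final (cc A Q s0 \<delta> F) \<and> vsum (dim (cc A Q s0 \<delta> F)) (map VS [0..<i]) \<in> constr (cc A Q s0 \<delta> F)"
      using Pr[of 1] vA(5) Tlt[of 0] T0 by (intro exI[of _ "k + T 1"]) auto
    show "\<exists>\<^sub>\<infinity>j. P j \<in> final (cc A Q s0 \<delta> F)"
      unfolding INFM_nat
    proof
      fix m
      have "m < k + T (Suc m)" using Tge[of "Suc m"] by simp
      then show "\<exists>n>m. P n \<in> final (cc A Q s0 \<delta> F)" using Pr[of "Suc m"] by auto
    qed
  qed
qed

lemma conc_rpba:
  assumes "finite \<Sigma>" "parikh_recognizable \<Sigma> U" "regular \<Sigma> V"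
  shows "rpba_recognizable \<Sigma> (lang_conc U (omega_iter V))"
proof -
  obtain A where A: "pa_wf \<Sigma> A" "U = {w. pa_accepts A w}"
    using assms(2) unfolding parikh_recognizable_def by blast
  obtain Q q0 \<delta> F where N: "finite Q" "q0 \<in> Q" "F \<subseteq> Q" "\<delta> \<subseteq> Q \<times> \<Sigma> \<times> Q"
    "V = nfa_lang q0 \<delta> F"
    using assms(3) unfolding regular_def nfa_lang_def by blast
  have "lang_conc U (omega_iter V) = {\<alpha>. rpba_accepts (cc A Q q0 \<delta> F) \<alpha>}"
  proof
    show "lang_conc U (omega_iter V) \<subseteq> {\<alpha>. rpba_accepts (cc A Q q0 \<delta> F) \<alpha>}"
    proof
      fix \<alpha> assume "\<alpha> \<in> lang_conc U (omega_iter V)"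
      then obtain u \<beta> where ub: "\<alpha> = conc_inf u \<beta>" "u \<in> U" "\<beta> \<in> omega_iter V"
        unfolding lang_conc_def by blast
      have "rpba_accepts (cc A Q q0 \<delta> F) (conc_inf u \<beta>)"
        using ub A(2) N(5) by (intro cc_complete[OF A(1) N(4)]) simp_all
      then show "\<alpha> \<in> {\<alpha>. rpba_accepts (cc A Q q0 \<delta> F) \<alpha>}" using ub(1) by simp
    qed
    show "{\<alpha>. rpba_accepts (cc A Q q0 \<delta> F) \<alpha>} \<subseteq> lang_conc U (omega_iter V)"
    proof
      fix \<alpha> assume "\<alpha> \<in> {\<alpha>. rpba_accepts (cc A Q q0 \<delta> F) \<alpha>}"
      then have "\<alpha> \<in> lang_conc {w. pa_accepts A w} (omega_iter (nfa_lang q0 \<delta> F))"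
        using cc_sound[OF A(1)] by simp
      then show "\<alpha> \<in> lang_conc U (omega_iter V)" using A(2) N(5) by simp
    qed
  qed
  then show ?thesis unfolding rpba_recognizable_def using cc_wf[OF assms(1) A(1) N(1-4)] by blast
qed

lemma union_n:
  fixes \<Sigma> :: "'a set" and U V :: "nat \<Rightarrow> 'a list set"
  assumes "finite \<Sigma>"
  shows "(\<forall>i \<in> {1..n}. parikh_recognizable \<Sigma> (U i)) \<longrightarrow> (\<forall>i \<in> {1..n}. regular \<Sigma> (V i)) \<longrightarrow>
    rpba_recognizable \<Sigma> (\<Union>i \<in> {1..n}. lang_conc (U i) (omega_iter (V i)))"
proof (induction n)
  case 0
  have "(\<Union>i \<in> {1..0::nat}. lang_conc (U i) (omega_iter (V i))) = {}" by simp
  then show ?case using rpba_empty by metis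
next
  case (Suc n)
  show ?case
  proof (intro impI)
    assume a: "\<forall>i \<in> {1..Suc n}. parikh_recognizable \<Sigma> (U i)" "\<forall>i \<in> {1..Suc n}. regular \<Sigma> (V i)"
    have a1: "\<forall>i \<in> {1..n}. parikh_recognizable \<Sigma> (U i)" "\<forall>i \<in> {1..n}. regular \<Sigma> (V i)"
      using a by auto
    have eq: "(\<Union>i \<in> {1..Suc n}. lang_conc (U i) (omega_iter (V i)))
        = (\<Union>i \<in> {1..n}. lang_conc (U i) (omega_iter (V i))) \<union> lang_conc (U (Suc n)) (omega_iter (V (Suc n)))"
      by (simp add: atLeastAtMostSuc_conv Un_commute)
    have IH: "rpba_recognizable \<Sigma> (\<Union>i \<in> {1..n}. lang_conc (U i) (omega_iter (V i)))"
      using Suc.IH a1 by blast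
    have C: "rpba_recognizable \<Sigma> (lang_conc (U (Suc n)) (omega_iter (V (Suc n))))"
      using a by (intro conc_rpba[OF assms]) auto
    show "rpba_recognizable \<Sigma> (\<Union>i \<in> {1..Suc n}. lang_conc (U i) (omega_iter (V i)))"
      unfolding eq by (rule rpba_union[OF IH C])
  qed
qed

theorem corollary2:
  fixes \<Sigma> :: "'a set" and n :: nat and U V :: "nat \<Rightarrow> 'a list set"
  assumes "finite \<Sigma>"
    and "\<forall>i \<in> {1..n}. parikh_recognizable \<Sigma> (U i)"
    and "\<forall>i \<in> {1..n}. regular \<Sigma> (V i)"
  shows "rpba_recognizable \<Sigma> (\<Union>i \<in> {1..n}. lang_conc (U i) (omega_iter (V i)))"
  using union_n[OF assms(1)] assms(2,3) by blast

end
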